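(* Let $\alpha \in \mathbb{R}_{>0}$ and let $M_\alpha = \{f(\alpha) \mid f(x) \in \mathbb{N}_0[x,x^{-1}]\}$, regarded as an additive monoid. The following statements are equivalent: (a) $1 \in \mathcal{A}(M_\alpha)$; (b) $\mathcal{A}(M_\alpha) = \{\alpha^n \mid n \in \mathbb{Z}\}$; (c) $M_\alpha$ is atomic. Moreover, suppose $\alpha \in \mathbb{R}_{>0} \setminus \{1\}$ is an algebraic number. If $M_\alpha$ is atomic, then neither of the two components in the minimal pair of $\alpha$ is a monic monomial (i.e., neither equals $x^n$ for some $n \in \mathbb{N}_0$).
   Context: $\mathbb{N}_0[x,x^{-1}]$ denotes the semiring of Laurent polynomials with coefficients in the nonnegative integers $\mathbb{N}_0$. For a (cancellative, commutative, reduced, additively written) monoid $M$, a nonzero element $a$ is an atom if $a = x+y$ with $x,y\in M$ implies $x=0$ or $y=0$; $\mathcal{A}(M)$ is the set of atoms, and $M$ is atomic if every nonzero element is a sum of atoms. For a monic polynomial $f(x) \in \mathbb{Q}[x]$, let $\ell$ be the smallest positive integer with $\ell f(x) \in \mathbb{Z}[x]$; the minimal pair of $f$ is the unique pair $(p(x),q(x))$ with $p(x),q(x) \in \mathbb{N}_0[x]$, $\ell f(x) = p(x) - q(x)$, and $p$ and $q$ having no monomials of the same degree in common. The minimal pair of a real algebraic number $\alpha$ is the minimal pair of its minimal polynomial over $\mathbb{Q}$. *)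

theory Defs
  imports "HOL-Computational_Algebra.Polynomial" "HOL-Computational_Algebra.Polynomial_Factorial" Complex_Main
begin

definition M_alpha :: "real \<Rightarrow> real set" where
  "M_alpha \<alpha> = {(\<Sum>i\<in>S. of_nat (c i) * \<alpha> powi i) | S c. finite (S :: int set)}"

definition atoms :: "real set \<Rightarrow> real set" where
  "atoms M = {a \<in> M. a \<noteq> 0 \<and> (\<forall>x\<in>M. \<forall>y\<in>M. a = x + y \<longrightarrow> x = 0 \<or> y = 0)}"

definition atomic :: "real set \<Rightarrow> bool" where
  "atomic M \<longleftrightarrow> (\<forall>a\<in>M. a \<noteq> 0 \<longrightarrow> (\<exists>xs. xs \<noteq> [] \<and> set xs \<subseteq> atoms M \<and> sum_list xs = a))"

definition is_min_poly :: "real \<Rightarrow> rat poly \<Rightarrow> bool" where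
  "is_min_poly \<alpha> p \<longleftrightarrow> lead_coeff p = 1 \<and> poly (map_poly of_rat p) \<alpha> = 0 \<and>
     (\<forall>q. q \<noteq> 0 \<and> poly (map_poly of_rat q) \<alpha> = 0 \<longrightarrow> degree p \<le> degree q)"

definition min_poly :: "real \<Rightarrow> rat poly" where
  "min_poly \<alpha> = (THE p. is_min_poly \<alpha> p)"

definition denom_lcm :: "rat poly \<Rightarrow> nat" where
  "denom_lcm f = (LEAST l::nat. l > 0 \<and> (\<forall>i. coeff (smult (of_nat l) f) i \<in> \<int>))"

definition is_minimal_pair :: "rat poly \<Rightarrow> nat poly \<Rightarrow> nat poly \<Rightarrow> bool" where
  "is_minimal_pair f p q \<longleftrightarrow>
     map_poly of_nat p - map_poly of_nat q = smult (of_nat (denom_lcm f)) f \<and>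
     (\<forall>i. coeff p i = 0 \<or> coeff q i = 0)"

end

theory Submission
  imports Defs
begin

lemma M_sum_in:
  assumes "finite S"
  shows "(\<Sum>i\<in>S. of_nat (c i) * \<alpha> powi i) \<in> M_alpha \<alpha>"
  using assms unfolding M_alpha_def by blast

lemma M_zero: "0 \<in> M_alpha \<alpha>"
  using M_sum_in[of "{}"] by simp

lemma M_pow: "\<alpha> powi n \<in> M_alpha \<alpha>"
  using M_sum_in[of "{n}" "\<lambda>_. 1" \<alpha>] by simp

lemma M_natsum:
  assumes "finite (S::nat set)"
  shows "(\<Sum>i\<in>S. of_nat (c i) * \<alpha> ^ i) \<in> M_alpha \<alpha>"
proof -
  have "(\<Sum>i\<in>S. of_nat (c i) * \<alpha> ^ i) = (\<Sum>i\<in>int ` S. of_nat (c (nat i)) * \<alpha> powi i)"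
    by (subst sum.reindex) (auto simp: inj_on_def)
  then show ?thesis using M_sum_in[of "int ` S" "\<lambda>i. c (nat i)" \<alpha>] assms by simp
qed

lemma M_mult:
  assumes "x \<in> M_alpha \<alpha>" "\<alpha> \<noteq> 0"
  shows "\<alpha> powi n * x \<in> M_alpha \<alpha>"
proof -
  obtain S c where S: "finite S" and x: "x = (\<Sum>i\<in>S. of_nat (c i) * \<alpha> powi i)"
    using assms(1) unfolding M_alpha_def by blast
  have "\<alpha> powi n * x = (\<Sum>i\<in>S. of_nat (c i) * \<alpha> powi (i + n))"
    unfolding x sum_distrib_left
    by (intro sum.cong) (auto simp: power_int_add assms(2))
  also have "\<dots> = (\<Sum>j\<in>(\<lambda>i. i + n) ` S. of_nat (c (j - n)) * \<alpha> powi j)"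
    by (subst sum.reindex) (auto simp: inj_on_def)
  finally show ?thesis using M_sum_in[of "(\<lambda>i. i + n) ` S" "\<lambda>j. c (j - n)" \<alpha>] S by simp
qed

lemma M_split:
  assumes "a \<in> M_alpha \<alpha>" "a \<noteq> 0"
  shows "\<exists>k. a - \<alpha> powi k \<in> M_alpha \<alpha>"
proof -
  obtain S c where S: "finite S" and a: "a = (\<Sum>i\<in>S. of_nat (c i) * \<alpha> powi i)"
    using assms(1) unfolding M_alpha_def by blast
  obtain k where k: "k \<in> S" "c k > 0"
    using assms(2) a by (metis (no_types, lifting) gr0I mult_eq_0_iff of_nat_0 sum.neutral)
  define c' where "c' = c(k := c k - 1)"
  define T where "T = (\<Sum>i\<in>S-{k}. of_nat (c i) * \<alpha> powi i)"
  define r where "r = real (c k - 1)"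
  have rk: "real (c k) = r + 1" using k unfolding r_def by linarith
  have A: "a = real (c k) * \<alpha> powi k + T"
    unfolding a T_def using S k by (simp add: sum.remove)
  have B1: "(\<Sum>i\<in>S-{k}. of_nat (c' i) * \<alpha> powi i) = T"
    unfolding T_def by (intro sum.cong) (auto simp: c'_def)
  have B2: "real (c' k) = r" by (simp add: c'_def r_def)
  have B3: "(\<Sum>i\<in>S. of_nat (c' i) * \<alpha> powi i) = of_nat (c' k) * \<alpha> powi k + (\<Sum>i\<in>S-{k}. of_nat (c' i) * \<alpha> powi i)"
    by (rule sum.remove[OF S k(1)])
  have "a - \<alpha> powi k = (\<Sum>i\<in>S. of_nat (c' i) * \<alpha> powi i)"
    unfolding B3 B1 B2 A rk by (simp add: algebra_simps)
  then show ?thesis using M_sum_in[OF S] by metis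
qed

lemma atoms_sub:
  assumes "\<alpha> > 0" "a \<in> atoms (M_alpha \<alpha>)"
  shows "\<exists>k. a = \<alpha> powi k"
proof -
  have aM: "a \<in> M_alpha \<alpha>" "a \<noteq> 0" and at: "\<forall>x\<in>M_alpha \<alpha>. \<forall>y\<in>M_alpha \<alpha>. a = x + y \<longrightarrow> x = 0 \<or> y = 0"
    using assms(2) unfolding atoms_def by auto
  obtain k where k: "a - \<alpha> powi k \<in> M_alpha \<alpha>" using M_split[OF aM] by blast
  have "\<alpha> powi k \<noteq> 0" using assms(1) by simp
  then have "a - \<alpha> powi k = 0" using at k M_pow[of \<alpha> k] by force
  then show ?thesis by auto
qed

lemma atoms_shift:
  assumes "\<alpha> > 0" "\<alpha> powi k \<in> atoms (M_alpha \<alpha>)"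
  shows "\<alpha> powi n \<in> atoms (M_alpha \<alpha>)"
proof -
  have at: "\<forall>x\<in>M_alpha \<alpha>. \<forall>y\<in>M_alpha \<alpha>. \<alpha> powi k = x + y \<longrightarrow> x = 0 \<or> y = 0"
    using assms(2) unfolding atoms_def by auto
  have ne: "\<alpha> \<noteq> 0" using assms(1) by simp
  have "x = 0 \<or> y = 0" if "x \<in> M_alpha \<alpha>" "y \<in> M_alpha \<alpha>" "\<alpha> powi n = x + y" for x y
  proof -
    have "\<alpha> powi k = \<alpha> powi (k - n) * \<alpha> powi n"
      using ne by (metis diff_add_cancel power_int_add)
    then have "\<alpha> powi k = \<alpha> powi (k - n) * x + \<alpha> powi (k - n) * y"
      using that(3) by (simp add: algebra_simps)
    then have "\<alpha> powi (k - n) * x = 0 \<or> \<alpha> powi (k - n) * y = 0"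
      using at M_mult[OF that(1) ne] M_mult[OF that(2) ne] by blast
    then show ?thesis using ne by simp
  qed
  then show ?thesis unfolding atoms_def using M_pow[of \<alpha> n] ne by auto
qed

lemma M_sumlist:
  assumes "finite S"
  shows "\<exists>xs. set xs \<subseteq> {\<alpha> powi n | n. True} \<and> sum_list xs = (\<Sum>i\<in>S. of_nat (c i) * \<alpha> powi i)"
  using assms
proof (induction S rule: finite_induct)
  case empty
  then show ?case by (intro exI[of _ "[]"]) simp
next
  case (insert i S)
  then obtain xs where xs: "set xs \<subseteq> {\<alpha> powi n | n. True}" "sum_list xs = (\<Sum>i\<in>S. of_nat (c i) * \<alpha> powi i)"
    by blast
  show ?case
    by (intro exI[of _ "replicate (c i) (\<alpha> powi i) @ xs"])
       (use xs insert in \<open>auto simp: sum_list_replicate\<close>)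
qed


lemma map_of_rat_diff:
  "map_poly (of_rat :: rat \<Rightarrow> real) (a - b) = map_poly of_rat a - map_poly of_rat b"
  by (intro poly_eqI) (simp add: coeff_map_poly of_rat_diff)

lemma map_of_rat_smult:
  "map_poly (of_rat :: rat \<Rightarrow> real) (smult c a) = smult (of_rat c) (map_poly of_rat a)"
  by (rule map_poly_smult) (simp_all add: of_rat_mult)

lemma map_of_rat_nat:
  "map_poly (of_rat :: rat \<Rightarrow> real) (map_poly of_nat p) = map_poly of_nat p"
  by (intro poly_eqI) (simp add: coeff_map_poly)

lemma min_poly_root:
  fixes \<alpha> :: real
  assumes "algebraic \<alpha>"
  shows "poly (map_poly of_rat (min_poly \<alpha>)) \<alpha> = 0"
proof -
  obtain p :: "real poly" where p: "\<And>i. coeff p i \<in> \<int>" "p \<noteq> 0" "poly p \<alpha> = 0"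
    using assms unfolding algebraic_def by blast
  have "\<And>i. coeff p i \<in> \<rat>" using p(1) Ints_subset_Rats by blast
  then obtain q where q: "p = map_poly of_rat q" by (rule ratpolyE)
  define P where "P = (\<lambda>q::rat poly. q \<noteq> 0 \<and> poly (map_poly of_rat q) \<alpha> = 0)"
  have Pq: "P q" using p q unfolding P_def by auto
  define d where "d = (LEAST d. \<exists>q. P q \<and> degree q = d)"
  have "\<exists>q. P q \<and> degree q = d"
    unfolding d_def by (rule LeastI_ex) (use Pq in blast)
  then obtain q0 where q0: "P q0" "degree q0 = d" by blast
  have dle: "d \<le> degree q" if "P q" for q
    unfolding d_def by (rule Least_le) (use that in blast)
  define m where "m = smult (inverse (lead_coeff q0)) q0"
  have lc0: "lead_coeff q0 \<noteq> 0" using q0 unfolding P_def by (metis leading_coeff_0_iff)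
  have mlc: "lead_coeff m = 1" unfolding m_def using lc0 by simp
  have mdeg: "degree m = d" unfolding m_def using lc0 q0 by simp
  have mroot: "poly (map_poly of_rat m) \<alpha> = 0"
    using q0 unfolding m_def P_def map_of_rat_smult by simp
  have ism: "is_min_poly \<alpha> m"
    unfolding is_min_poly_def using mlc mdeg mroot dle unfolding P_def by auto
  have uniq: "p1 = p2" if h1: "is_min_poly \<alpha> p1" and h2: "is_min_poly \<alpha> p2" for p1 p2
  proof (rule ccontr)
    assume ne: "p1 \<noteq> p2"
    have n1: "p1 \<noteq> 0" "p2 \<noteq> 0" using h1 h2 unfolding is_min_poly_def by auto
    have deq: "degree p1 = degree p2" using h1 h2 n1 unfolding is_min_poly_def
      by (metis le_antisym)
    have rne: "p1 - p2 \<noteq> 0" using ne by simp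
    have rroot: "poly (map_poly of_rat (p1 - p2)) \<alpha> = 0"
      using h1 h2 unfolding is_min_poly_def map_of_rat_diff by simp
    have "degree p1 \<le> degree (p1 - p2)" using h1 rne rroot unfolding is_min_poly_def by blast
    moreover have "degree (p1 - p2) \<le> degree p1" using deq
      by (metis degree_diff_le_max max.idem)
    ultimately have "degree (p1 - p2) = degree p1" by simp
    moreover have "coeff (p1 - p2) (degree p1) = 0"
      using h1 h2 deq unfolding is_min_poly_def by simp
    ultimately show False using rne by (metis leading_coeff_0_iff)
  qed
  have "is_min_poly \<alpha> (min_poly \<alpha>)"
    unfolding min_poly_def by (rule theI[of _ m]) (use ism uniq in blast)+
  then show ?thesis unfolding is_min_poly_def by blast
qed

lemma atom_poly:
  fixes \<alpha> :: real and r :: "nat poly"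
  assumes "\<alpha> > 0" "\<alpha> \<noteq> 1" "\<alpha> ^ n \<in> atoms (M_alpha \<alpha>)"
    and Q: "poly (map_poly of_nat r) \<alpha> = \<alpha> ^ n"
  shows "r = monom 1 n"
proof -
  have at: "\<forall>x\<in>M_alpha \<alpha>. \<forall>y\<in>M_alpha \<alpha>. \<alpha> ^ n = x + y \<longrightarrow> x = 0 \<or> y = 0"
    using assms(3) unfolding atoms_def by auto
  define j where "j = degree r"
  have Qs: "poly (map_poly of_nat r) \<alpha> = (\<Sum>i\<le>j. real (coeff r i) * \<alpha> ^ i)"
  proof -
    have "poly (map_poly of_nat r) \<alpha> = (\<Sum>i\<le>degree (map_poly (of_nat :: nat \<Rightarrow> real) r). coeff (map_poly of_nat r) i * \<alpha> ^ i)"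
      by (rule poly_altdef)
    then show ?thesis unfolding j_def by (simp add: coeff_map_poly degree_map_poly)
  qed
  have rne: "r \<noteq> 0"
  proof
    assume "r = 0" then have "\<alpha> ^ n = 0" using Q by simp
    then show False using assms(1) by simp
  qed
  then have cj: "coeff r j > 0" unfolding j_def by (metis gr0I leading_coeff_0_iff)
  define c' where "c' = (coeff r)(j := coeff r j - 1)"
  define R where "R = (\<Sum>i\<le>j. real (c' i) * \<alpha> ^ i)"
  have RM: "R \<in> M_alpha \<alpha>" unfolding R_def by (rule M_natsum) simp
  define T where "T = (\<Sum>i\<in>{..j}-{j}. real (coeff r i) * \<alpha> ^ i)"
  define t where "t = real (coeff r j - 1)"
  have tk: "real (coeff r j) = t + 1" using cj unfolding t_def by linarith
  have A: "poly (map_poly of_nat r) \<alpha> = real (coeff r j) * \<alpha> ^ j + T"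
    unfolding Qs T_def by (rule sum.remove) auto
  have B1: "(\<Sum>i\<in>{..j}-{j}. real (c' i) * \<alpha> ^ i) = T"
    unfolding T_def by (intro sum.cong) (auto simp: c'_def)
  have B2: "real (c' j) = t" by (simp add: c'_def t_def)
  have B3: "R = real (c' j) * \<alpha> ^ j + (\<Sum>i\<in>{..j}-{j}. real (c' i) * \<alpha> ^ i)"
    unfolding R_def by (rule sum.remove) auto
  have split: "\<alpha> ^ n = \<alpha> ^ j + R"
    unfolding Q[symmetric] A B3 B1 B2 tk by (simp add: algebra_simps)
  have "\<alpha> ^ j \<in> M_alpha \<alpha>" using M_pow[of \<alpha> "int j"] by simp
  moreover have "\<alpha> ^ j \<noteq> 0" using assms(1) by simp
  ultimately have R0: "R = 0" using at RM split by blast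
  have "\<forall>i\<in>{..j}. real (c' i) * \<alpha> ^ i = 0"
    using R0 unfolding R_def by (subst (asm) sum_nonneg_eq_0_iff) (use assms(1) in auto)
  then have c0: "c' i = 0" if "i \<le> j" for i using that assms(1) by auto
  have rm: "r = monom 1 j"
  proof (rule poly_eqI)
    fix i
    show "coeff r i = coeff (monom 1 j) i"
    proof (cases "i \<le> j")
      case True
      then show ?thesis using c0[OF True] cj unfolding c'_def
        by (auto simp: coeff_monom split: if_splits)
    next
      case False
      then show ?thesis unfolding j_def by (simp add: coeff_eq_0 coeff_monom)
    qed
  qed
  have "\<alpha> ^ n = \<alpha> ^ j" using split R0 by simp
  then have "ln (\<alpha> ^ n) = ln (\<alpha> ^ j)" by simp
  then have "real n * ln \<alpha> = real j * ln \<alpha>" using assms(1) by (simp add: ln_realpow)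
  moreover have "ln \<alpha> \<noteq> 0" using assms(1,2) by simp
  ultimately have "n = j" by simp
  then show ?thesis using rm by simp
qed

theorem theorem3p1:
  fixes \<alpha> :: real
  assumes "\<alpha> > 0"
  shows "((1 \<in> atoms (M_alpha \<alpha>)) \<longleftrightarrow> atoms (M_alpha \<alpha>) = {\<alpha> powi n | n. True})
       \<and> (atoms (M_alpha \<alpha>) = {\<alpha> powi n | n. True} \<longleftrightarrow> atomic (M_alpha \<alpha>))
       \<and> (\<alpha> \<noteq> 1 \<longrightarrow> algebraic \<alpha> \<longrightarrow> atomic (M_alpha \<alpha>) \<longrightarrow>
           (\<forall>p q. is_minimal_pair (min_poly \<alpha>) p q \<longrightarrow>
              (\<forall>n. p \<noteq> monom 1 n \<and> q \<noteq> monom 1 n)))"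
proof -
  let ?M = "M_alpha \<alpha>"
  let ?P = "{\<alpha> powi n | n. True}"
  have ab: "1 \<in> atoms ?M \<Longrightarrow> atoms ?M = ?P"
  proof -
    assume h: "1 \<in> atoms ?M"
    have "\<alpha> powi 0 \<in> atoms ?M" using h by simp
    then have "\<alpha> powi n \<in> atoms ?M" for n using atoms_shift[OF assms] by blast
    moreover have "a \<in> ?P" if "a \<in> atoms ?M" for a using atoms_sub[OF assms that] by blast
    ultimately show ?thesis by blast
  qed
  have ba: "atoms ?M = ?P \<Longrightarrow> 1 \<in> atoms ?M"
  proof -
    assume "atoms ?M = ?P"
    moreover have "(1::real) = \<alpha> powi 0" by simp
    ultimately show ?thesis by blast
  qed
  have bc: "atoms ?M = ?P \<Longrightarrow> atomic ?M"
  proof -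
    assume h: "atoms ?M = ?P"
    show ?thesis unfolding atomic_def
    proof (intro ballI impI)
      fix a assume "a \<in> ?M" "a \<noteq> 0"
      then obtain S c where S: "finite S" and a: "a = (\<Sum>i\<in>S. of_nat (c i) * \<alpha> powi i)"
        unfolding M_alpha_def by blast
      obtain xs where "set xs \<subseteq> ?P" "sum_list xs = a" using M_sumlist[OF S, of \<alpha> c] a by blast
      then show "\<exists>xs. xs \<noteq> [] \<and> set xs \<subseteq> atoms ?M \<and> sum_list xs = a"
        using h \<open>a \<noteq> 0\<close> by (intro exI[of _ xs]) auto
    qed
  qed
  have cb: "atomic ?M \<Longrightarrow> atoms ?M = ?P"
  proof -
    assume h: "atomic ?M"
    have "(1::real) \<in> ?M" using M_pow[of \<alpha> 0] by simp
    then obtain xs where "xs \<noteq> []" "set xs \<subseteq> atoms ?M"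
      using h unfolding atomic_def by fastforce
    then obtain a where "a \<in> atoms ?M" by (metis list.set_sel(1) subsetD)
    then obtain k where "\<alpha> powi k \<in> atoms ?M" using atoms_sub[OF assms] by metis
    then have "\<alpha> powi 0 \<in> atoms ?M" using atoms_shift[OF assms] by blast
    then show ?thesis using ab by simp
  qed
  have part3: "\<forall>p q. is_minimal_pair (min_poly \<alpha>) p q \<longrightarrow> (\<forall>n. p \<noteq> monom 1 n \<and> q \<noteq> monom 1 n)"
    if ne1: "\<alpha> \<noteq> 1" and alg: "algebraic \<alpha>" and atc: "atomic ?M"
  proof (intro allI impI)
    fix p q n
    assume mp: "is_minimal_pair (min_poly \<alpha>) p q"
    have atn: "\<alpha> ^ m \<in> atoms ?M" for m
      using cb[OF atc] by (metis (mono_tags, lifting) mem_Collect_eq power_int_of_nat)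
    have E: "map_poly of_nat p - map_poly of_nat q = smult (of_nat (denom_lcm (min_poly \<alpha>))) (min_poly \<alpha>)"
      and disj: "\<forall>i. coeff p i = 0 \<or> coeff q i = 0"
      using mp unfolding is_minimal_pair_def by auto
    have "map_poly (of_rat :: rat \<Rightarrow> real) (map_poly of_nat p - map_poly of_nat q)
        = map_poly of_rat (smult (of_nat (denom_lcm (min_poly \<alpha>))) (min_poly \<alpha>))"
      using E by simp
    then have "map_poly of_nat p - map_poly of_nat q
        = smult (of_rat (of_nat (denom_lcm (min_poly \<alpha>)))) (map_poly (of_rat :: rat \<Rightarrow> real) (min_poly \<alpha>))"
      unfolding map_of_rat_diff map_of_rat_nat map_of_rat_smult .
    then have "poly (map_poly of_nat p - map_poly of_nat q) \<alpha> = 0"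
      using min_poly_root[OF alg] by simp
    then have pq: "poly (map_poly (of_nat :: nat \<Rightarrow> real) p) \<alpha> = poly (map_poly of_nat q) \<alpha>"
      by simp
    have mm: "poly (map_poly (of_nat :: nat \<Rightarrow> real) (monom 1 n)) \<alpha> = \<alpha> ^ n"
    proof -
      have "map_poly (of_nat :: nat \<Rightarrow> real) (monom 1 n) = monom 1 n"
        by (intro poly_eqI) (simp add: coeff_map_poly coeff_monom)
      then show ?thesis by (simp add: poly_monom)
    qed
    show "p \<noteq> monom 1 n \<and> q \<noteq> monom 1 n"
    proof (intro conjI notI)
      assume hp: "p = monom 1 n"
      then have "q = monom 1 n" using atom_poly[OF assms ne1 atn] pq mm by metis
      then show False using disj hp by (metis coeff_monom one_neq_zero)
    next
      assume hq: "q = monom 1 n"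
      then have "p = monom 1 n" using atom_poly[OF assms ne1 atn] pq mm by metis
      then show False using disj hq by (metis coeff_monom one_neq_zero)
    qed
  qed
  show ?thesis using ab ba bc cb part3 by blast
qed

end
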